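(* Let $p$ be a prime such that $2^p-1$ is a (Mersenne) prime. Then $2^{p-1}(2^p-1)$ is the only even perfect number which is $3(2p-1)$-$T_0T^\ast$-perfect.
   Context: A perfect number is a positive integer $N$ with $\sigma(N)=2N$. For a positive integer $m$, $T(m)$ denotes the product of all positive divisors of $m$, and $T^\ast(m)$ the product of all unitary divisors of $m$ (divisors $d$ with $\gcd(d,m/d)=1$). For an integer $K\ge 2$, an integer $n>1$ is called $K$-$T_0T^\ast$-perfect if $T(T^\ast(n))=n^K$. *)

theory Defs
  imports "HOL-Computational_Algebra.Primes"
begin

definition sigma :: "nat \<Rightarrow> nat" where
  "sigma n = (\<Sum>d\<in>{d. d dvd n}. d)"

definition perfect :: "nat \<Rightarrow> bool" where
  "perfect N \<longleftrightarrow> N > 0 \<and> sigma N = 2 * N"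

text \<open>T(m): product of all positive divisors of m.\<close>
definition divisor_prod :: "nat \<Rightarrow> nat" where
  "divisor_prod m = (\<Prod>d\<in>{d. d dvd m}. d)"

text \<open>T*(m): product of all unitary divisors of m.\<close>
definition unitary_divisor_prod :: "nat \<Rightarrow> nat" where
  "unitary_divisor_prod m = (\<Prod>d\<in>{d. d dvd m \<and> coprime d (m div d)}. d)"

definition K_T0Tstar_perfect :: "nat \<Rightarrow> nat \<Rightarrow> bool" where
  "K_T0Tstar_perfect K n \<longleftrightarrow> K \<ge> 2 \<and> n > 1 \<and>
     divisor_prod (unitary_divisor_prod n) = n ^ K"

end

theory Submission
  imports Defs
begin

lemma pow2_odd_inj:
  fixes d e :: nat
  assumes "2^i*d = 2^j*e" "odd d" "odd e"
  shows "i = j \<and> d = e"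
proof -
  have "i = j"
  proof (rule ccontr)
    assume "i \<noteq> j"
    then consider "i < j" | "j < i" by linarith
    then show False
    proof cases
      case 1
      then have "2^j*e = 2^i*(2^(j-i)*e)" by (simp add: power_add[symmetric] mult.assoc[symmetric])
      with assms have "d = 2^(j-i)*e" by simp
      with 1 assms(2) show False by simp
    next
      case 2
      then have "2^i*d = 2^j*(2^(i-j)*d)" by (simp add: power_add[symmetric] mult.assoc[symmetric])
      with assms have "e = 2^(i-j)*d" by simp
      with 2 assms(3) show False by simp
    qed
  qed
  with assms show ?thesis by simp
qed

lemma divs_2pow_odd:
  fixes m :: nat
  assumes "odd m"
  shows "{d. d dvd 2^k*m} = (\<lambda>(i,d). 2^i*d) ` ({..k} \<times> {d. d dvd m})"
    and "inj_on (\<lambda>(i,d). (2::nat)^i*d) ({..k} \<times> {d. d dvd m})"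
proof -
  show "{d. d dvd 2^k*m} = (\<lambda>(i,d). 2^i*d) ` ({..k} \<times> {d. d dvd m})"
  proof (intro set_eqI iffI)
    fix x assume "x \<in> {d. d dvd 2^k*m}"
    then obtain b c where "x = b*c" "b dvd 2^k" "c dvd m" using division_decomp by blast
    then obtain i where "i \<le> k" "b = 2^i" using divides_primepow_nat[of 2] by auto
    with \<open>x = b*c\<close> \<open>c dvd m\<close> show "x \<in> (\<lambda>(i,d). 2^i*d) ` ({..k} \<times> {d. d dvd m})" by force
  next
    fix x assume "x \<in> (\<lambda>(i,d). 2^i*d) ` ({..k} \<times> {d. d dvd m})"
    then obtain i d where "x = 2^i*d" "i \<le> k" "d dvd m" by auto
    then show "x \<in> {d. d dvd 2^k*m}" by (simp add: le_imp_power_dvd mult_dvd_mono)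
  qed
  show "inj_on (\<lambda>(i,d). (2::nat)^i*d) ({..k} \<times> {d. d dvd m})"
  proof (rule inj_onI, clarsimp)
    fix i d j e :: nat assume "d dvd m" "e dvd m" "2^i*d = 2^j*e"
    moreover have "odd d" "odd e" using assms \<open>d dvd m\<close> \<open>e dvd m\<close> by (meson dvd_trans)+
    ultimately show "i = j \<and> d = e" using pow2_odd_inj by blast
  qed
qed

lemma sigma_2pow_odd:
  assumes "odd m"
  shows "sigma (2^k*m) = (2^(k+1) - 1) * sigma m"
proof -
  have "sigma (2^k*m) = (\<Sum>x\<in>{..k} \<times> {d. d dvd m}. (\<lambda>(i,d). 2^i*d) x)"
    unfolding sigma_def divs_2pow_odd(1)[OF assms] by (rule sum.reindex[OF divs_2pow_odd(2)[OF assms], unfolded comp_def])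
  also have "\<dots> = (\<Sum>i\<in>{..k}. \<Sum>d\<in>{d. d dvd m}. 2^i*d)" unfolding sum.cartesian_product by simp
  also have "\<dots> = (\<Sum>i\<in>{..k}. 2^i * sigma m)" by (simp add: sigma_def sum_distrib_left)
  also have "\<dots> = (\<Sum>i\<in>{..k}. 2^i) * sigma m" by (rule sum_distrib_right[symmetric])
  also have "(\<Sum>i\<in>{..k}. (2::nat)^i) = 2^(k+1) - 1"
    using sum_power2[of "k+1"] by (simp add: atLeast0LessThan lessThan_Suc_atMost)
  finally show ?thesis .
qed

lemma card_divs_2pow_odd:
  fixes m :: nat
  assumes "odd m" "m > 0"
  shows "card {d. d dvd 2^k*m} = (k+1) * card {d. d dvd m}"
  unfolding divs_2pow_odd(1)[OF assms(1)] card_image[OF divs_2pow_odd(2)[OF assms(1)]]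
  by (simp add: card_cartesian_product)

lemma two_pow_odd_decomp:
  fixes n :: nat
  assumes "n > 0"
  shows "\<exists>k m. n = 2^k*m \<and> odd m"
  using assms
proof (induction n rule: less_induct)
  case (less n)
  show ?case
  proof (cases "even n")
    case True
    then obtain n' where n': "n = 2*n'" by blast
    with less.prems have "n' < n" "n' > 0" by auto
    from less.IH[OF this] obtain k m where "n' = 2^k*m" "odd m" by blast
    with n' have "n = 2^(Suc k)*m" by simp
    with \<open>odd m\<close> show ?thesis by blast
  next
    case False
    then have "n = 2^0*n" by simp
    with False show ?thesis by blast
  qed
qed

lemma sigma_ge3:
  fixes m c :: nat
  assumes "m > 0" "c dvd m" "c \<noteq> 1" "c \<noteq> m"
  shows "1 + c + m \<le> sigma m"
proof -
  have c0: "c \<noteq> 0" using assms by auto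
  have m1: "m \<noteq> 1" using assms by auto
  have sub: "{1, c, m} \<subseteq> {d. d dvd m}" using assms by auto
  have "sum (\<lambda>d. d) {1, c, m} = 1 + c + m" using assms m1 by simp
  moreover have "sum (\<lambda>d. d) {1, c, m} \<le> sum (\<lambda>d. d) {d. d dvd m}"
    by (rule sum_mono2[OF finite_divisors_nat[OF assms(1)] sub]) simp
  ultimately show ?thesis unfolding sigma_def by simp
qed

lemma even_perfect:
  fixes N :: nat
  assumes "even N" "perfect N"
  shows "\<exists>q. q \<ge> 2 \<and> prime (2^q - 1::nat) \<and> N = 2^(q-1)*(2^q-1)"
proof -
  have N0: "N > 0" and sN: "sigma N = 2*N" using assms(2) unfolding perfect_def by auto
  obtain k m where km: "N = 2^k*m" "odd m" using two_pow_odd_decomp[OF N0] by blast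
  have k1: "k \<ge> 1" using km assms(1) by (cases k) auto
  have m0: "m > 0" using km N0 by (cases m) auto
  define A :: nat where "A = 2^(k+1)"
  have "(2::nat)^2 \<le> 2^(k+1)" by (rule power_increasing) (use k1 in auto)
  then have A4: "A \<ge> 4" unfolding A_def by simp
  define s where "s = sigma m"
  have eq: "(A - 1) * s = A * m"
    using sigma_2pow_odd[OF km(2), of k] sN km(1) unfolding A_def s_def by simp
  have cop: "coprime (A - 1) A"
  proof -
    have "A = Suc (A - 1)" using A4 by simp
    then show ?thesis by (metis coprime_Suc_right_nat)
  qed
  have "(A - 1) dvd A * m" using eq by (metis dvd_triv_left)
  then have "(A - 1) dvd m" using cop by (simp add: coprime_dvd_mult_right_iff)
  then obtain c where c: "m = (A - 1) * c" by blast
  have c0: "c > 0" using c m0 by (cases c) auto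
  have "(A - 1) * s = (A - 1) * (A * c)" using eq c by (metis mult.left_commute)
  then have sAc: "s = A * c" using A4 by simp
  have "A * c = (A - 1) * c + c" using A4 by (cases A) auto
  then have smc: "s = m + c" using sAc c by simp
  have c1: "c = 1"
  proof (rule ccontr)
    assume "c \<noteq> 1"
    moreover have "c \<noteq> m" using c c0 A4 by simp
    moreover have "c dvd m" using c by simp
    ultimately have "1 + c + m \<le> sigma m" using sigma_ge3 m0 by blast
    with smc s_def show False by simp
  qed
  have mA: "m = A - 1" using c c1 by simp
  have pm: "prime m"
    unfolding prime_nat_iff
  proof (intro conjI allI impI)
    show "1 < m" using mA A4 by simp
    fix d assume "d dvd m"
    show "d = 1 \<or> d = m"
    proof (rule ccontr)
      assume "\<not> (d = 1 \<or> d = m)"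
      then have "1 + d + m \<le> sigma m" using sigma_ge3 m0 \<open>d dvd m\<close> by blast
      moreover have "d \<noteq> 0" using \<open>d dvd m\<close> m0 by auto
      ultimately show False using smc c1 s_def by simp
    qed
  qed
  show ?thesis
    by (rule exI[of _ "k+1"]) (use k1 pm mA km A_def in auto)
qed

lemma divisor_prod_sq:
  fixes m :: nat
  assumes "m > 0"
  shows "divisor_prod m ^ 2 = m ^ card {d. d dvd m}"
proof -
  let ?D = "{d. d dvd m}"
  have bij: "bij_betw (\<lambda>d. m div d) ?D ?D"
    by (rule bij_betw_byWitness[where f' = "\<lambda>d. m div d"])
       (use assms in \<open>auto simp: div_div_eq_right dvd_div_eq_mult\<close>)
  have "(\<Prod>d\<in>?D. m div d) = (\<Prod>d\<in>?D. d)"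
    using prod.reindex_bij_betw[OF bij, of "\<lambda>d. d"] by simp
  then have "divisor_prod m ^ 2 = (\<Prod>d\<in>?D. d) * (\<Prod>d\<in>?D. m div d)"
    unfolding divisor_prod_def by (simp add: power2_eq_square)
  also have "\<dots> = (\<Prod>d\<in>?D. d * (m div d))" by (rule prod.distrib[symmetric])
  also have "\<dots> = (\<Prod>d\<in>?D. m)" by (rule prod.cong) auto
  also have "\<dots> = m ^ card ?D" by simp
  finally show ?thesis .
qed

lemma divs_prime: "prime (M::nat) \<Longrightarrow> {d. d dvd M} = {1, M}"
  by (auto simp: prime_nat_iff)

lemma sigma_prime: "prime (M::nat) \<Longrightarrow> sigma M = M + 1"
  unfolding sigma_def using divs_prime[of M] prime_gt_1_nat[of M] by simp

lemma unitary_N: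
  fixes q :: nat
  assumes q2: "q \<ge> 2" and pM: "prime (2^q - 1 :: nat)"
  defines "M \<equiv> (2::nat)^q - 1" and "a \<equiv> (2::nat)^(q-1)"
  shows "unitary_divisor_prod (a * M) = (a * M)^2"
proof -
  let ?N = "a * M"
  have M1: "M > 1" using pM prime_gt_1_nat M_def by simp
  have oM: "odd M" using q2 unfolding M_def by (cases q) auto
  have "(2::nat)^1 \<le> 2^(q-1)" by (rule power_increasing) (use q2 in auto)
  then have a2: "a \<ge> 2" unfolding a_def by simp
  have ea: "even a" using q2 unfolding a_def by (cases "q - 1") auto
  have copaM: "coprime a M" unfolding a_def using oM by (simp add: coprime_power_left_iff)
  have pM': "prime M" using pM M_def by simp
  have set_eq: "{d. d dvd ?N \<and> coprime d (?N div d)} = {1, a, M, ?N}"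
  proof (intro set_eqI iffI)
    fix d assume "d \<in> {d. d dvd ?N \<and> coprime d (?N div d)}"
    then have dN: "d dvd ?N" and cop: "coprime d (?N div d)" by auto
    from dN have "d \<in> (\<lambda>(i,d). 2^i*d) ` ({..q-1} \<times> {d. d dvd M})"
      using divs_2pow_odd(1)[OF oM, of "q-1"] unfolding a_def by blast
    then obtain i e where de: "d = 2^i * e" "i \<le> q-1" "e dvd M" by auto
    have e: "e = 1 \<or> e = M" using de(3) divs_prime[OF pM'] by auto
    have oe: "odd e" using e oM by auto
    show "d \<in> {1, a, M, ?N}"
    proof (cases "i = 0 \<or> i = q - 1")
      case True
      then show ?thesis using e de unfolding a_def by auto
    next
      case False
      define r where "r = ?N div d"
      have Ndr: "?N = d * r" using dN r_def by simp
      have p: "(2::nat)^(q-1) = 2^i * 2^(q-1-i)" using de(2) by (simp add: power_add[symmetric])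
      have "2^i * (e * r) = 2^i * (2^(q-1-i) * M)"
        using Ndr de(1) p unfolding a_def by (simp add: mult.assoc)
      then have "e * r = 2^(q-1-i) * M" by simp
      moreover have "q - 1 - i > 0" using False de(2) by arith
      ultimately have "even (e * r)" by simp
      with oe have er: "even r" by simp
      have ed: "even d" using False de(1) by simp
      have "is_unit (2::nat)" using coprime_common_divisor[OF cop[folded r_def] ed er] .
      then show ?thesis by simp
    qed
  next
    fix d assume "d \<in> {1, a, M, ?N}"
    moreover have "?N div a = M" using a2 by simp
    moreover have "?N div M = a" using M1 by simp
    ultimately show "d \<in> {d. d dvd ?N \<and> coprime d (?N div d)}"
      using copaM M1 a2 by (auto simp: coprime_commute)
  qed
  have "a \<noteq> 1" "a \<noteq> M" "a \<noteq> ?N" "1 \<noteq> M" "1 \<noteq> ?N" "M \<noteq> ?N"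
    using a2 M1 ea oM by auto
  then have "(\<Prod>d\<in>{1, a, M, ?N}. d) = a * M * ?N" by simp
  then show ?thesis unfolding unitary_divisor_prod_def set_eq by (simp add: power2_eq_square)
qed

lemma TT_N:
  fixes q :: nat
  assumes q2: "q \<ge> 2" and pM: "prime (2^q - 1 :: nat)"
  shows "divisor_prod (unitary_divisor_prod (2^(q-1)*(2^q-1))) = (2^(q-1)*(2^q-1))^(3*(2*q-1))"
proof -
  define M :: nat where "M = 2^q - 1"
  define a :: nat where "a = 2^(q-1)"
  define N where "N = a * M"
  have M1: "M > 1" using pM prime_gt_1_nat M_def by simp
  have oM: "odd M" using q2 unfolding M_def by (cases q) auto
  have pM': "prime M" using pM M_def by simp
  have U: "unitary_divisor_prod N = N^2" unfolding N_def a_def M_def using unitary_N[OF q2 pM] by simp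
  have N0: "N > 0" using M1 unfolding N_def a_def by simp
  have N2: "N^2 = 2^(2*q-2) * M^2" unfolding N_def a_def
    by (simp add: power_mult_distrib power_mult[symmetric] mult.commute diff_mult_distrib2)
  have dM2: "{d. d dvd M^2} = (\<lambda>i. M^i) ` {..2}"
    using divides_primepow_nat[OF pM', of _ 2] by auto
  have "inj_on (\<lambda>i. M^i) {..2}" using M1 by (auto intro: inj_onI simp: power_inject_exp)
  then have c3: "card {d. d dvd M^2} = 3" unfolding dM2 by (simp add: card_image)
  have "card {d. d dvd N^2} = (2*q-2+1) * 3"
    unfolding N2 using card_divs_2pow_odd[of "M^2" "2*q-2"] oM M1 c3 by simp
  also have "\<dots> = 3*(2*q-1)" using q2 by simp
  finally have cN: "card {d. d dvd N^2} = 3*(2*q-1)" .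
  have "divisor_prod (N^2) ^ 2 = (N^2) ^ (3*(2*q-1))"
    using divisor_prod_sq[of "N^2"] N0 cN by simp
  also have "\<dots> = (N ^ (3*(2*q-1)))^2" by (simp add: power_mult[symmetric] mult.commute)
  finally have "divisor_prod (N^2) = N ^ (3*(2*q-1))"
    by (rule power_eq_imp_eq_base) auto
  then show ?thesis using U unfolding N_def a_def M_def by simp
qed

theorem mainTheorem14:
  fixes p :: nat
  assumes "prime p" and "prime (2 ^ p - 1 :: nat)"
  shows "\<forall>N::nat. (even N \<and> perfect N \<and> K_T0Tstar_perfect (3 * (2 * p - 1)) N)
           \<longleftrightarrow> N = 2 ^ (p - 1) * (2 ^ p - 1)"
proof (intro allI iffI)
  have p2: "p \<ge> 2" using assms(1) prime_ge_2_nat by blast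
  fix N :: nat
  {
    assume H: "even N \<and> perfect N \<and> K_T0Tstar_perfect (3 * (2 * p - 1)) N"
    then obtain q where q: "q \<ge> 2" "prime (2^q - 1::nat)" "N = 2^(q-1)*(2^q-1)"
      using even_perfect by blast
    have N1: "N > 1" using H unfolding K_T0Tstar_perfect_def by simp
    have "N ^ (3*(2*q-1)) = N ^ (3 * (2 * p - 1))"
      using H TT_N[OF q(1) q(2)] q(3) unfolding K_T0Tstar_perfect_def by simp
    then have "3*(2*q-1) = 3 * (2 * p - 1)" using N1 by (simp add: power_inject_exp)
    then have "q = p" using q(1) p2 by simp
    with q(3) show "N = 2 ^ (p - 1) * (2 ^ p - 1)" by simp
  }
  {
    assume NE: "N = 2 ^ (p - 1) * (2 ^ p - 1)"
    define M :: nat where "M = 2^p - 1"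
    have M1: "M > 1" using assms(2) prime_gt_1_nat M_def by simp
    have oM: "odd M" using p2 unfolding M_def by (cases p) auto
    have "(2::nat)^1 \<le> 2^(p-1)" by (rule power_increasing) (use p2 in auto)
    then have a2: "(2::nat)^(p-1) \<ge> 2" by simp
    have ev: "even N" using NE p2 by (cases "p - 1") auto
    have "sigma N = (2^(p-1+1) - 1) * sigma M" using NE sigma_2pow_odd[OF oM] M_def by simp
    also have "\<dots> = M * (M + 1)" using sigma_prime[OF assms(2)] p2 M_def by simp
    also have "M + 1 = 2^p" unfolding M_def by simp
    also have "(2::nat)^p = 2 * 2^(p-1)" using p2 by (cases p) auto
    finally have sN: "sigma N = 2 * N" using NE M_def by simp
    have "N = 2^(p-1) * M" using NE M_def by simp
    then have N1: "N > 1" using M1 a2 less_1_mult[of "2^(p-1)" M] by simp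
    have K2: "2 \<le> 3*(2*p-1)" using p2 by arith
    have P1: "Suc 0 < 2^p" using M1 M_def by simp
    show "even N \<and> perfect N \<and> K_T0Tstar_perfect (3 * (2 * p - 1)) N"
      unfolding perfect_def K_T0Tstar_perfect_def
      using ev sN N1 K2 P1 TT_N[OF p2 assms(2)] NE by simp
  }
qed

end
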